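(* Let $G$ be a two-player stage game and consider the pure-pure regime. There exist a positive integer $T$ and an SPE of $G(T)$ (in the pure-pure regime) in which locally suboptimal behavior occurs if and only if at least one of the following holds: (1) $|V_1^{p,p}|>1$, $|V_2^{p,p}|>1$, and there exist $\hat a_1\in A_1,\hat a_2\in A_2$ with $(\hat a_1,\hat a_2)\notin \mathrm{Nash}^{p,p}(G)$; (2) $|V_1^{p,p}|>1$, $|V_2^{p,p}|=1$, and there exist $\hat a_1,a_1'\in A_1$, $\hat a_2\in A_2$ with $u_1(\hat a_1,\hat a_2)<u_1(a_1',\hat a_2)$ and $\hat a_2$ a best response to $\hat a_1$; (3) $|V_1^{p,p}|=1$, $|V_2^{p,p}|>1$, and there exist $\hat a_1\in A_1$, $\hat a_2,a_2'\in A_2$ with $u_2(\hat a_1,\hat a_2)<u_2(\hat a_1,a_2')$ and $\hat a_1$ a best response to $\hat a_2$.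
   Context: A two-player stage game $G$ consists of finite nonempty action sets $A_1,A_2$ and payoff functions $u_1,u_2:A_1\times A_2\to\mathbb{R}$. An action $a_i$ is a best response to the opponent's action if it maximizes player $i$'s payoff against it. For an integer $T\ge 1$, $G(T)$ is the $T$-round repetition of $G$ in which after each round both realized actions are observed and each player's payoff is the sum of stage payoffs over the $T$ rounds. In the pure-pure regime, both players are restricted to pure strategies: a strategy of player $i$ in $G(T)$ is a map $\mu_i:\bigcup_{k=0}^{T-1}(A_1\times A_2)^k\to A_i$ from histories to actions, and deviations are restricted to such strategies. A strategy profile $\mu$ of $G(T)$ is a subgame-perfect equilibrium (SPE) if for every $0\le k<T$ and every history $h$ of length $k$, the continuation profile $\mu_{|h}$ (defined by $\mu_{i|h}(h')=\mu_i(h,h')$) is a Nash equilibrium of $G(T-k)$. $\mathrm{Nash}^{p,p}(G)$ is the set of pure action profiles of $G$ that are Nash equilibria (no player gains by a unilateral deviation to another action), and $V_i^{p,p}=\{u_i(a):a\in\mathrm{Nash}^{p,p}(G)\}$. Locally suboptimal behavior occurs in an SPE $\mu$ of $G(T)$ if there exist $0\le k<T$ and a history $h$ of length $k$ with $(\mu_1(h),\mu_2(h))\notin\mathrm{Nash}^{p,p}(G)$. *)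

theory Defs
  imports Main "HOL.Real"
begin

text \<open>Histories are lists of realized action profiles (oldest first).
  Pure strategies of G(T) are functions from histories to actions; only their values on
  histories of length < T with entries in A1 x A2 matter, and there they must lie in A_i.\<close>

definition nash_pp :: "'a set \<Rightarrow> 'b set \<Rightarrow> ('a \<Rightarrow> 'b \<Rightarrow> real) \<Rightarrow> ('a \<Rightarrow> 'b \<Rightarrow> real) \<Rightarrow> ('a \<times> 'b) set" where
  "nash_pp A1 A2 u1 u2 = {(a1, a2). a1 \<in> A1 \<and> a2 \<in> A2 \<and>
      (\<forall>b1\<in>A1. u1 b1 a2 \<le> u1 a1 a2) \<and> (\<forall>b2\<in>A2. u2 a1 b2 \<le> u2 a1 a2)}"

definition V1_pp :: "'a set \<Rightarrow> 'b set \<Rightarrow> ('a \<Rightarrow> 'b \<Rightarrow> real) \<Rightarrow> ('a \<Rightarrow> 'b \<Rightarrow> real) \<Rightarrow> real set" where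
  "V1_pp A1 A2 u1 u2 = (\<lambda>(a1, a2). u1 a1 a2) ` nash_pp A1 A2 u1 u2"

definition V2_pp :: "'a set \<Rightarrow> 'b set \<Rightarrow> ('a \<Rightarrow> 'b \<Rightarrow> real) \<Rightarrow> ('a \<Rightarrow> 'b \<Rightarrow> real) \<Rightarrow> real set" where
  "V2_pp A1 A2 u1 u2 = (\<lambda>(a1, a2). u2 a1 a2) ` nash_pp A1 A2 u1 u2"

definition best_resp1 :: "'a set \<Rightarrow> ('a \<Rightarrow> 'b \<Rightarrow> real) \<Rightarrow> 'a \<Rightarrow> 'b \<Rightarrow> bool" where
  "best_resp1 A1 u1 a1 a2 \<longleftrightarrow> a1 \<in> A1 \<and> (\<forall>b1\<in>A1. u1 b1 a2 \<le> u1 a1 a2)"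

definition best_resp2 :: "'b set \<Rightarrow> ('a \<Rightarrow> 'b \<Rightarrow> real) \<Rightarrow> 'a \<Rightarrow> 'b \<Rightarrow> bool" where
  "best_resp2 A2 u2 a1 a2 \<longleftrightarrow> a2 \<in> A2 \<and> (\<forall>b2\<in>A2. u2 a1 b2 \<le> u2 a1 a2)"

definition histories :: "'a set \<Rightarrow> 'b set \<Rightarrow> nat \<Rightarrow> ('a \<times> 'b) list set" where
  "histories A1 A2 k = {h. length h = k \<and> set h \<subseteq> A1 \<times> A2}"

definition strategy :: "'a set \<Rightarrow> 'b set \<Rightarrow> 'c set \<Rightarrow> nat \<Rightarrow> (('a \<times> 'b) list \<Rightarrow> 'c) \<Rightarrow> bool" where
  "strategy A1 A2 Ai T \<mu> \<longleftrightarrow> (\<forall>k<T. \<forall>h\<in>histories A1 A2 k. \<mu> h \<in> Ai)"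

fun play :: "(('a \<times> 'b) list \<Rightarrow> 'a) \<Rightarrow> (('a \<times> 'b) list \<Rightarrow> 'b) \<Rightarrow> nat \<Rightarrow> ('a \<times> 'b) list" where
  "play \<mu>1 \<mu>2 0 = []"
| "play \<mu>1 \<mu>2 (Suc k) = (let h = play \<mu>1 \<mu>2 k in h @ [(\<mu>1 h, \<mu>2 h)])"

definition payoff :: "('a \<Rightarrow> 'b \<Rightarrow> real) \<Rightarrow> nat \<Rightarrow> (('a \<times> 'b) list \<Rightarrow> 'a) \<Rightarrow> (('a \<times> 'b) list \<Rightarrow> 'b) \<Rightarrow> real" where
  "payoff u T \<mu>1 \<mu>2 = (\<Sum>(a1, a2) \<leftarrow> play \<mu>1 \<mu>2 T. u a1 a2)"

text \<open>Nash equilibrium of G(T), pure-pure regime (deviations to pure strategies only).\<close>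
definition nash_rep :: "'a set \<Rightarrow> 'b set \<Rightarrow> ('a \<Rightarrow> 'b \<Rightarrow> real) \<Rightarrow> ('a \<Rightarrow> 'b \<Rightarrow> real) \<Rightarrow> nat
     \<Rightarrow> (('a \<times> 'b) list \<Rightarrow> 'a) \<Rightarrow> (('a \<times> 'b) list \<Rightarrow> 'b) \<Rightarrow> bool" where
  "nash_rep A1 A2 u1 u2 T \<mu>1 \<mu>2 \<longleftrightarrow>
     strategy A1 A2 A1 T \<mu>1 \<and> strategy A1 A2 A2 T \<mu>2 \<and>
     (\<forall>\<sigma>1. strategy A1 A2 A1 T \<sigma>1 \<longrightarrow> payoff u1 T \<sigma>1 \<mu>2 \<le> payoff u1 T \<mu>1 \<mu>2) \<and>
     (\<forall>\<sigma>2. strategy A1 A2 A2 T \<sigma>2 \<longrightarrow> payoff u2 T \<mu>1 \<sigma>2 \<le> payoff u2 T \<mu>1 \<mu>2)"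

definition spe :: "'a set \<Rightarrow> 'b set \<Rightarrow> ('a \<Rightarrow> 'b \<Rightarrow> real) \<Rightarrow> ('a \<Rightarrow> 'b \<Rightarrow> real) \<Rightarrow> nat
     \<Rightarrow> (('a \<times> 'b) list \<Rightarrow> 'a) \<Rightarrow> (('a \<times> 'b) list \<Rightarrow> 'b) \<Rightarrow> bool" where
  "spe A1 A2 u1 u2 T \<mu>1 \<mu>2 \<longleftrightarrow>
     strategy A1 A2 A1 T \<mu>1 \<and> strategy A1 A2 A2 T \<mu>2 \<and>
     (\<forall>k<T. \<forall>h\<in>histories A1 A2 k.
        nash_rep A1 A2 u1 u2 (T - k) (\<lambda>h'. \<mu>1 (h @ h')) (\<lambda>h'. \<mu>2 (h @ h')))"

definition locally_suboptimal :: "'a set \<Rightarrow> 'b set \<Rightarrow> ('a \<Rightarrow> 'b \<Rightarrow> real) \<Rightarrow> ('a \<Rightarrow> 'b \<Rightarrow> real) \<Rightarrow> nat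
     \<Rightarrow> (('a \<times> 'b) list \<Rightarrow> 'a) \<Rightarrow> (('a \<times> 'b) list \<Rightarrow> 'b) \<Rightarrow> bool" where
  "locally_suboptimal A1 A2 u1 u2 T \<mu>1 \<mu>2 \<longleftrightarrow>
     (\<exists>k<T. \<exists>h\<in>histories A1 A2 k. (\<mu>1 h, \<mu>2 h) \<notin> nash_pp A1 A2 u1 u2)"

end

theory Submission
  imports Defs
begin


lemma play_length[simp]: "length (play f g n) = n"
  by (induction n) (simp_all add: Let_def)

lemma play_shift: "play f g (Suc n) = (f [], g []) # play (\<lambda>h. f ((f [], g []) # h)) (\<lambda>h. g ((f [], g []) # h)) n"
proof (induction n)
  case 0 show ?case by simp
next
  case (Suc n)
  have "play f g (Suc (Suc n)) = (let h = play f g (Suc n) in h @ [(f h, g h)])" by (rule play.simps(2))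
  also have "\<dots> = (f [], g []) # play (\<lambda>h. f ((f [], g []) # h)) (\<lambda>h. g ((f [], g []) # h)) (Suc n)"
    unfolding Suc.IH by (simp add: Let_def)
  finally show ?case .
qed

lemma payoff_0[simp]: "payoff u 0 f g = 0" by (simp add: payoff_def)

lemma payoff_Suc: "payoff u (Suc n) f g = payoff u n f g + u (f (play f g n)) (g (play f g n))"
  by (simp add: payoff_def Let_def)

lemma payoff_shift: "payoff u (Suc n) f g = u (f []) (g []) + payoff u n (\<lambda>h. f ((f [], g []) # h)) (\<lambda>h. g ((f [], g []) # h))"
  unfolding payoff_def play_shift by simp

lemma ol1:
  assumes "strategy A1 A2 A1 n \<sigma>" "\<forall>j<n. g2 j \<in> A2" "\<forall>j<n. \<forall>b\<in>A1. u1 b (g2 j) \<le> u1 (g1 j) (g2 j)"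
  shows "payoff u1 n \<sigma> (\<lambda>h. g2 (length h)) \<le> (\<Sum>j<n. u1 (g1 j) (g2 j))"
proof -
  have "k \<le> n \<Longrightarrow> payoff u1 k \<sigma> (\<lambda>h. g2 (length h)) \<le> (\<Sum>j<k. u1 (g1 j) (g2 j)) \<and> play \<sigma> (\<lambda>h. g2 (length h)) k \<in> histories A1 A2 k" for k
  proof (induction k)
    case 0 show ?case by (simp add: histories_def)
  next
    case (Suc k)
    let ?p = "play \<sigma> (\<lambda>h. g2 (length h)) k"
    from Suc have ih: "payoff u1 k \<sigma> (\<lambda>h. g2 (length h)) \<le> (\<Sum>j<k. u1 (g1 j) (g2 j))" "?p \<in> histories A1 A2 k" by auto
    have s: "\<sigma> ?p \<in> A1" using assms(1) ih(2) Suc.prems unfolding strategy_def by (meson Suc_le_lessD)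
    have g: "g2 k \<in> A2" using assms(2) Suc.prems by auto
    have b: "u1 (\<sigma> ?p) (g2 k) \<le> u1 (g1 k) (g2 k)" using assms(3) s Suc.prems by auto
    have hp: "play \<sigma> (\<lambda>h. g2 (length h)) (Suc k) \<in> histories A1 A2 (Suc k)"
      using ih(2) s g by (simp add: histories_def Let_def)
    have pe: "payoff u1 (Suc k) \<sigma> (\<lambda>h. g2 (length h)) = payoff u1 k \<sigma> (\<lambda>h. g2 (length h)) + u1 (\<sigma> ?p) (g2 k)"
      by (simp add: payoff_Suc)
    have "payoff u1 (Suc k) \<sigma> (\<lambda>h. g2 (length h)) \<le> (\<Sum>j<Suc k. u1 (g1 j) (g2 j))"
      unfolding pe using ih(1) b by simp
    with hp show ?case by simp
  qed
  thus ?thesis by auto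
qed

lemma ol2:
  assumes "strategy A1 A2 A2 n \<sigma>" "\<forall>j<n. g1 j \<in> A1" "\<forall>j<n. \<forall>b\<in>A2. u2 (g1 j) b \<le> u2 (g1 j) (g2 j)"
  shows "payoff u2 n (\<lambda>h. g1 (length h)) \<sigma> \<le> (\<Sum>j<n. u2 (g1 j) (g2 j))"
proof -
  have "k \<le> n \<Longrightarrow> payoff u2 k (\<lambda>h. g1 (length h)) \<sigma> \<le> (\<Sum>j<k. u2 (g1 j) (g2 j)) \<and> play (\<lambda>h. g1 (length h)) \<sigma> k \<in> histories A1 A2 k" for k
  proof (induction k)
    case 0 show ?case by (simp add: histories_def)
  next
    case (Suc k)
    let ?p = "play (\<lambda>h. g1 (length h)) \<sigma> k"
    from Suc have ih: "payoff u2 k (\<lambda>h. g1 (length h)) \<sigma> \<le> (\<Sum>j<k. u2 (g1 j) (g2 j))" "?p \<in> histories A1 A2 k" by auto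
    have s: "\<sigma> ?p \<in> A2" using assms(1) ih(2) Suc.prems unfolding strategy_def by (meson Suc_le_lessD)
    have g: "g1 k \<in> A1" using assms(2) Suc.prems by auto
    have b: "u2 (g1 k) (\<sigma> ?p) \<le> u2 (g1 k) (g2 k)" using assms(3) s Suc.prems by auto
    have hp: "play (\<lambda>h. g1 (length h)) \<sigma> (Suc k) \<in> histories A1 A2 (Suc k)"
      using ih(2) s g by (simp add: histories_def Let_def)
    have pe: "payoff u2 (Suc k) (\<lambda>h. g1 (length h)) \<sigma> = payoff u2 k (\<lambda>h. g1 (length h)) \<sigma> + u2 (g1 k) (\<sigma> ?p)"
      by (simp add: payoff_Suc)
    have "payoff u2 (Suc k) (\<lambda>h. g1 (length h)) \<sigma> \<le> (\<Sum>j<Suc k. u2 (g1 j) (g2 j))"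
      unfolding pe using ih(1) b by simp
    with hp show ?case by simp
  qed
  thus ?thesis by auto
qed

lemma ol_eq: "payoff u n (\<lambda>h. g1 (length h)) (\<lambda>h. g2 (length h)) = (\<Sum>j<n. u (g1 j) (g2 j))"
  by (induction n) (simp_all add: payoff_Suc)

lemma ol_nash:
  assumes "\<forall>j. (g1 j, g2 j) \<in> nash_pp A1 A2 u1 u2"
  shows "nash_rep A1 A2 u1 u2 n (\<lambda>h. g1 (length h)) (\<lambda>h. g2 (length h))"
proof -
  have N: "g1 j \<in> A1" "g2 j \<in> A2" "\<forall>b\<in>A1. u1 b (g2 j) \<le> u1 (g1 j) (g2 j)" "\<forall>b\<in>A2. u2 (g1 j) b \<le> u2 (g1 j) (g2 j)" for j
    using assms[rule_format, of j] by (auto simp: nash_pp_def)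
  show ?thesis unfolding nash_rep_def
  proof (intro conjI allI impI)
    show "strategy A1 A2 A1 n (\<lambda>h. g1 (length h))" using N by (simp add: strategy_def)
    show "strategy A1 A2 A2 n (\<lambda>h. g2 (length h))" using N by (simp add: strategy_def)
  next
    fix \<sigma> assume "strategy A1 A2 A1 n \<sigma>"
    then show "payoff u1 n \<sigma> (\<lambda>h. g2 (length h)) \<le> payoff u1 n (\<lambda>h. g1 (length h)) (\<lambda>h. g2 (length h))"
      unfolding ol_eq using ol1[of A1 A2 n \<sigma> g2 u1 g1] N by auto
  next
    fix \<sigma> assume "strategy A1 A2 A2 n \<sigma>"
    then show "payoff u2 n (\<lambda>h. g1 (length h)) \<sigma> \<le> payoff u2 n (\<lambda>h. g1 (length h)) (\<lambda>h. g2 (length h))"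
      unfolding ol_eq using ol2[of A1 A2 n \<sigma> g1 u2 g2] N by auto
  qed
qed

lemma sum_two: fixes f :: "nat \<Rightarrow> real"
  assumes "\<forall>j<m. f j = a" "\<forall>j. m \<le> j \<longrightarrow> j < 2*m \<longrightarrow> f j = b"
  shows "(\<Sum>j<2*m. f j) = real m * a + real m * b"
proof -
  have e: "{..<2*m} = {..<m} \<union> {m..<2*m}" by auto
  have "(\<Sum>j<2*m. f j) = (\<Sum>j<m. f j) + (\<Sum>j\<in>{m..<2*m}. f j)"
    unfolding e by (rule sum.union_disjoint) auto
  also have "(\<Sum>j<m. f j) = (\<Sum>j<m. a)" using assms(1) by (intro sum.cong) auto
  also have "(\<Sum>j\<in>{m..<2*m}. f j) = (\<Sum>j\<in>{m..<2*m}. b)" using assms(2) by (intro sum.cong) auto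
  finally show ?thesis by simp
qed

lemma arch_fin: fixes g :: "'c \<Rightarrow> real"
  assumes "finite A" "d > 0"
  shows "\<exists>m::nat. \<forall>b\<in>A. g b \<le> real m * d"
proof -
  obtain m :: nat where m: "(\<Sum>b\<in>A. \<bar>g b\<bar>) / d < real m" using reals_Archimedean2 by blast
  have "\<forall>b\<in>A. g b \<le> real m * d"
  proof
    fix b assume b: "b \<in> A"
    have "g b \<le> \<bar>g b\<bar>" by simp
    also have "\<dots> \<le> (\<Sum>b\<in>A. \<bar>g b\<bar>)" using b assms(1) by (intro member_le_sum) auto
    also have "\<dots> \<le> real m * d" using m assms(2) by (simp add: field_simps)
    finally show "g b \<le> real m * d" .
  qed
  thus ?thesis by blast
qed

lemma card_gt1: fixes S :: "real set" assumes "finite S" "card S > 1" shows "\<exists>a\<in>S. \<exists>b\<in>S. a < b"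
proof -
  have "S \<noteq> {}" using assms(2) by auto
  then obtain a where a: "a \<in> S" by blast
  have "card (S - {a}) > 0" using assms a by simp
  then have "S - {a} \<noteq> {}" by (metis card.empty less_irrefl)
  then obtain b where b: "b \<in> S" "b \<noteq> a" by blast
  then have "a < b \<or> b < a" by auto
  thus ?thesis using a b by blast
qed

lemma last_round:
  assumes "nash_rep A1 A2 u1 u2 (Suc 0) f1 f2"
  shows "(f1 [], f2 []) \<in> nash_pp A1 A2 u1 u2"
proof -
  have e: "[] \<in> histories A1 A2 0" by (simp add: histories_def)
  have s1: "f1 [] \<in> A1" using assms e unfolding nash_rep_def strategy_def by blast
  have s2: "f2 [] \<in> A2" using assms e unfolding nash_rep_def strategy_def by blast
  have b1: "u1 b (f2 []) \<le> u1 (f1 []) (f2 [])" if "b \<in> A1" for b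
  proof -
    have "strategy A1 A2 A1 (Suc 0) (\<lambda>_. b)" using that by (simp add: strategy_def)
    then have "payoff u1 (Suc 0) (\<lambda>_. b) f2 \<le> payoff u1 (Suc 0) f1 f2" using assms unfolding nash_rep_def by blast
    then show ?thesis by (simp add: payoff_Suc)
  qed
  have b2: "u2 (f1 []) b \<le> u2 (f1 []) (f2 [])" if "b \<in> A2" for b
  proof -
    have "strategy A1 A2 A2 (Suc 0) (\<lambda>_. b)" using that by (simp add: strategy_def)
    then have "payoff u2 (Suc 0) f1 (\<lambda>_. b) \<le> payoff u2 (Suc 0) f1 f2" using assms unfolding nash_rep_def by blast
    then show ?thesis by (simp add: payoff_Suc)
  qed
  show ?thesis using s1 s2 b1 b2 by (simp add: nash_pp_def)
qed

lemma construct: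
  fixes A1 :: "'a set" and A2 :: "'b set" and u1 u2 :: "'a \<Rightarrow> 'b \<Rightarrow> real"
  assumes a: "a1 \<in> A1" "a2 \<in> A2"
  and N: "x \<in> nash_pp A1 A2 u1 u2" "x' \<in> nash_pp A1 A2 u1 u2" "y \<in> nash_pp A1 A2 u1 u2" "y' \<in> nash_pp A1 A2 u1 u2"
  and C1: "\<forall>b\<in>A1. u1 b a2 + real m * u1 (fst (if b = a1 then x else x')) (snd (if b = a1 then x else x')) \<le> u1 a1 a2 + real m * u1 (fst x) (snd x)"
  and C2: "\<forall>b\<in>A2. u2 a1 b + real m * u2 (fst (if b = a2 then y else y')) (snd (if b = a2 then y else y')) \<le> u2 a1 a2 + real m * u2 (fst y) (snd y)"
  shows "\<exists>\<mu>1 \<mu>2. spe A1 A2 u1 u2 (Suc (2*m)) \<mu>1 \<mu>2 \<and> \<mu>1 [] = a1 \<and> \<mu>2 [] = a2"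
proof -
  define P :: "'a \<times> 'b \<Rightarrow> nat \<Rightarrow> 'a \<times> 'b" where
    "P c j = (if j \<le> m then (if fst c = a1 then x else x') else (if snd c = a2 then y else y'))" for c j
  define \<mu>1 where "\<mu>1 h = (if h = [] then a1 else fst (P (hd h) (length h)))" for h :: "('a\<times>'b) list"
  define \<mu>2 where "\<mu>2 h = (if h = [] then a2 else snd (P (hd h) (length h)))" for h :: "('a\<times>'b) list"
  have PN: "(fst (P c j), snd (P c j)) \<in> nash_pp A1 A2 u1 u2" for c j using N by (simp add: P_def)
  have PA: "fst (P c j) \<in> A1" "snd (P c j) \<in> A2" for c j using PN[of c j] by (auto simp: nash_pp_def)
  have PB1: "\<forall>b\<in>A1. u1 b (snd (P c j)) \<le> u1 (fst (P c j)) (snd (P c j))" for c j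
    using PN[of c j] by (auto simp: nash_pp_def)
  have PB2: "\<forall>b\<in>A2. u2 (fst (P c j)) b \<le> u2 (fst (P c j)) (snd (P c j))" for c j
    using PN[of c j] by (auto simp: nash_pp_def)
  have m1: "\<mu>1 h \<in> A1" for h using a PA by (simp add: \<mu>1_def)
  have m2: "\<mu>2 h \<in> A2" for h using a PA by (simp add: \<mu>2_def)
  have s1: "strategy A1 A2 A1 n (\<lambda>h'. \<mu>1 (h@h'))" for n h using m1 by (simp add: strategy_def)
  have s2: "strategy A1 A2 A2 n (\<lambda>h'. \<mu>2 (h@h'))" for n h using m2 by (simp add: strategy_def)
  have sub: "nash_rep A1 A2 u1 u2 n (\<lambda>h'. \<mu>1 (h@h')) (\<lambda>h'. \<mu>2 (h@h'))" if "h \<noteq> []" for h n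
  proof -
    have "nash_rep A1 A2 u1 u2 n (\<lambda>h'. fst (P (hd h) (length h + length h'))) (\<lambda>h'. snd (P (hd h) (length h + length h')))"
      using ol_nash[of "\<lambda>j. fst (P (hd h) (length h + j))" "\<lambda>j. snd (P (hd h) (length h + j))" A1 A2 u1 u2 n] PN by simp
    then show ?thesis using that by (simp add: \<mu>1_def \<mu>2_def)
  qed
  have e0: "[] \<in> histories A1 A2 0" by (simp add: histories_def)
  have sumx: "(\<Sum>j<2*m. u (fst (P c (Suc j))) (snd (P c (Suc j)))) =
      real m * u (fst (if fst c = a1 then x else x')) (snd (if fst c = a1 then x else x'))
      + real m * u (fst (if snd c = a2 then y else y')) (snd (if snd c = a2 then y else y'))" for c and u :: "'a \<Rightarrow> 'b \<Rightarrow> real"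
    by (rule sum_two) (auto simp: P_def)
  have pmu: "payoff u (Suc (2*m)) \<mu>1 \<mu>2 = u a1 a2 + real m * u (fst x) (snd x) + real m * u (fst y) (snd y)" for u
  proof -
    have "payoff u (Suc (2*m)) \<mu>1 \<mu>2 = u a1 a2 + payoff u (2*m) (\<lambda>h. fst (P (a1,a2) (Suc (length h)))) (\<lambda>h. snd (P (a1,a2) (Suc (length h))))"
      by (simp add: payoff_shift \<mu>1_def \<mu>2_def)
    also have "payoff u (2*m) (\<lambda>h. fst (P (a1,a2) (Suc (length h)))) (\<lambda>h. snd (P (a1,a2) (Suc (length h)))) = (\<Sum>j<2*m. u (fst (P (a1,a2) (Suc j))) (snd (P (a1,a2) (Suc j))))"
      using ol_eq[of u "2*m" "\<lambda>j. fst (P (a1,a2) (Suc j))" "\<lambda>j. snd (P (a1,a2) (Suc j))"] by simp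
    also have "\<dots> = real m * u (fst x) (snd x) + real m * u (fst y) (snd y)" unfolding sumx by simp
    finally show ?thesis by simp
  qed
  have root: "nash_rep A1 A2 u1 u2 (Suc (2*m)) \<mu>1 \<mu>2"
    unfolding nash_rep_def
  proof (intro conjI allI impI)
    show "strategy A1 A2 A1 (Suc (2 * m)) \<mu>1" using s1[of _ "[]"] by simp
    show "strategy A1 A2 A2 (Suc (2 * m)) \<mu>2" using s2[of _ "[]"] by simp
  next
    fix \<sigma> assume s\<sigma>: "strategy A1 A2 A1 (Suc (2*m)) \<sigma>"
    define c where "c = (\<sigma> [], a2)"
    have c1: "\<sigma> [] \<in> A1" using s\<sigma> e0 unfolding strategy_def by blast
    have ps: "payoff u1 (Suc (2*m)) \<sigma> \<mu>2 = u1 (\<sigma> []) a2 + payoff u1 (2*m) (\<lambda>h. \<sigma> (c # h)) (\<lambda>h. snd (P c (Suc (length h))))"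
      by (simp add: payoff_shift c_def \<mu>2_def)
    have s': "strategy A1 A2 A1 (2*m) (\<lambda>h. \<sigma> (c # h))"
      unfolding strategy_def
    proof (intro allI impI ballI)
      fix k h assume k: "k < 2*m" and h: "h \<in> histories A1 A2 k"
      have "c # h \<in> histories A1 A2 (Suc k)" using h c1 a by (simp add: histories_def c_def)
      moreover have "Suc k < Suc (2*m)" using k by simp
      ultimately show "\<sigma> (c # h) \<in> A1" using s\<sigma> unfolding strategy_def by blast
    qed
    have b: "payoff u1 (2*m) (\<lambda>h. \<sigma> (c # h)) (\<lambda>h. snd (P c (Suc (length h)))) \<le> (\<Sum>j<2*m. u1 (fst (P c (Suc j))) (snd (P c (Suc j))))"
      using ol1[of A1 A2 "2*m" "\<lambda>h. \<sigma> (c # h)" "\<lambda>j. snd (P c (Suc j))" u1 "\<lambda>j. fst (P c (Suc j))"] s' PA PB1 by simp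
    have "u1 (\<sigma> []) a2 + real m * u1 (fst (if \<sigma> [] = a1 then x else x')) (snd (if \<sigma> [] = a1 then x else x')) \<le> u1 a1 a2 + real m * u1 (fst x) (snd x)"
      using C1 c1 by blast
    then show "payoff u1 (Suc (2 * m)) \<sigma> \<mu>2 \<le> payoff u1 (Suc (2 * m)) \<mu>1 \<mu>2"
      using ps b pmu[of u1] sumx[of u1 c] by (simp add: c_def)
  next
    fix \<sigma> assume s\<sigma>: "strategy A1 A2 A2 (Suc (2*m)) \<sigma>"
    define c where "c = (a1, \<sigma> [])"
    have c1: "\<sigma> [] \<in> A2" using s\<sigma> e0 unfolding strategy_def by blast
    have ps: "payoff u2 (Suc (2*m)) \<mu>1 \<sigma> = u2 a1 (\<sigma> []) + payoff u2 (2*m) (\<lambda>h. fst (P c (Suc (length h)))) (\<lambda>h. \<sigma> (c # h))"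
      by (simp add: payoff_shift c_def \<mu>1_def)
    have s': "strategy A1 A2 A2 (2*m) (\<lambda>h. \<sigma> (c # h))"
      unfolding strategy_def
    proof (intro allI impI ballI)
      fix k h assume k: "k < 2*m" and h: "h \<in> histories A1 A2 k"
      have "c # h \<in> histories A1 A2 (Suc k)" using h c1 a by (simp add: histories_def c_def)
      moreover have "Suc k < Suc (2*m)" using k by simp
      ultimately show "\<sigma> (c # h) \<in> A2" using s\<sigma> unfolding strategy_def by blast
    qed
    have b: "payoff u2 (2*m) (\<lambda>h. fst (P c (Suc (length h)))) (\<lambda>h. \<sigma> (c # h)) \<le> (\<Sum>j<2*m. u2 (fst (P c (Suc j))) (snd (P c (Suc j))))"
      using ol2[of A1 A2 "2*m" "\<lambda>h. \<sigma> (c # h)" "\<lambda>j. fst (P c (Suc j))" u2 "\<lambda>j. snd (P c (Suc j))"] s' PA PB2 by simp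
    have "u2 a1 (\<sigma> []) + real m * u2 (fst (if \<sigma> [] = a2 then y else y')) (snd (if \<sigma> [] = a2 then y else y')) \<le> u2 a1 a2 + real m * u2 (fst y) (snd y)"
      using C2 c1 by blast
    then show "payoff u2 (Suc (2 * m)) \<mu>1 \<sigma> \<le> payoff u2 (Suc (2 * m)) \<mu>1 \<mu>2"
      using ps b pmu[of u2] sumx[of u2 c] by (simp add: c_def)
  qed
  have "spe A1 A2 u1 u2 (Suc (2*m)) \<mu>1 \<mu>2"
    unfolding spe_def
  proof (intro conjI allI impI ballI)
    show "strategy A1 A2 A1 (Suc (2 * m)) \<mu>1" using s1[of _ "[]"] by simp
    show "strategy A1 A2 A2 (Suc (2 * m)) \<mu>2" using s2[of _ "[]"] by simp
  next
    fix k h assume k: "k < Suc (2*m)" and h: "h \<in> histories A1 A2 k"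
    show "nash_rep A1 A2 u1 u2 (Suc (2 * m) - k) (\<lambda>h'. \<mu>1 (h @ h')) (\<lambda>h'. \<mu>2 (h @ h'))"
    proof (cases "h = []")
      case True
      then have "k = 0" using h by (simp add: histories_def)
      then show ?thesis using True root by simp
    next
      case False then show ?thesis by (rule sub)
    qed
  qed
  moreover have "\<mu>1 [] = a1" "\<mu>2 [] = a2" by (simp_all add: \<mu>1_def \<mu>2_def)
  ultimately show ?thesis by blast
qed



lemma BI:
  fixes A1 :: "'a set" and A2 :: "'b set" and u1 u2 :: "'a \<Rightarrow> 'b \<Rightarrow> real"
  assumes spe: "spe A1 A2 u1 u2 T \<mu>1 \<mu>2"
  and H: "\<forall>a1\<in>A1. \<forall>a2\<in>A2. ((\<exists>w. V1_pp A1 A2 u1 u2 = {w}) \<longrightarrow> best_resp1 A1 u1 a1 a2)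
     \<longrightarrow> ((\<exists>v. V2_pp A1 A2 u1 u2 = {v}) \<longrightarrow> best_resp2 A2 u2 a1 a2) \<longrightarrow> (a1,a2) \<in> nash_pp A1 A2 u1 u2"
  shows "n \<le> T \<Longrightarrow> \<forall>h\<in>histories A1 A2 (T-n). (0<n \<longrightarrow> (\<mu>1 h, \<mu>2 h) \<in> nash_pp A1 A2 u1 u2)
     \<and> (\<forall>w. V1_pp A1 A2 u1 u2 = {w} \<longrightarrow> payoff u1 n (\<lambda>h'. \<mu>1 (h@h')) (\<lambda>h'. \<mu>2 (h@h')) = real n * w)
     \<and> (\<forall>v. V2_pp A1 A2 u1 u2 = {v} \<longrightarrow> payoff u2 n (\<lambda>h'. \<mu>1 (h@h')) (\<lambda>h'. \<mu>2 (h@h')) = real n * v)"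
proof (induction n)
  case 0 show ?case by simp
next
  case (Suc n)
  have IH: "\<forall>h\<in>histories A1 A2 (T-n). (0<n \<longrightarrow> (\<mu>1 h, \<mu>2 h) \<in> nash_pp A1 A2 u1 u2)
     \<and> (\<forall>w. V1_pp A1 A2 u1 u2 = {w} \<longrightarrow> payoff u1 n (\<lambda>h'. \<mu>1 (h@h')) (\<lambda>h'. \<mu>2 (h@h')) = real n * w)
     \<and> (\<forall>v. V2_pp A1 A2 u1 u2 = {v} \<longrightarrow> payoff u2 n (\<lambda>h'. \<mu>1 (h@h')) (\<lambda>h'. \<mu>2 (h@h')) = real n * v)"
    using Suc.IH Suc.prems by simp
  show ?case
  proof
    fix h assume hH: "h \<in> histories A1 A2 (T - Suc n)"
    define k where "k = T - Suc n"
    have kT: "k < T" using Suc.prems by (simp add: k_def)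
    have hk: "h \<in> histories A1 A2 k" using hH k_def by simp
    have s1: "strategy A1 A2 A1 T \<mu>1" and s2: "strategy A1 A2 A2 T \<mu>2" using spe by (simp_all add: spe_def)
    have "nash_rep A1 A2 u1 u2 (T - k) (\<lambda>h'. \<mu>1 (h@h')) (\<lambda>h'. \<mu>2 (h@h'))"
      using spe kT hk unfolding spe_def by blast
    moreover have "T - k = Suc n" using Suc.prems k_def by simp
    ultimately have NR: "nash_rep A1 A2 u1 u2 (Suc n) (\<lambda>h'. \<mu>1 (h@h')) (\<lambda>h'. \<mu>2 (h@h'))" by simp
    define a1 where "a1 = \<mu>1 h"
    define a2 where "a2 = \<mu>2 h"
    have a1A: "a1 \<in> A1" using s1 kT hk unfolding strategy_def a1_def by blast
    have a2A: "a2 \<in> A2" using s2 kT hk unfolding strategy_def a2_def by blast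
    have ext: "h @ [p] \<in> histories A1 A2 (T - n)" if "p \<in> A1 \<times> A2" for p
      using hk that Suc.prems k_def by (auto simp: histories_def)
    have peq: "payoff u (Suc n) (\<lambda>h'. \<mu>1 (h@h')) (\<lambda>h'. \<mu>2 (h@h')) =
        u (fst p) (snd p) + payoff u n (\<lambda>h'. \<mu>1 ((h@[p])@h')) (\<lambda>h'. \<mu>2 ((h@[p])@h'))"
      if "p = (a1, a2)" for u p
      using that by (simp add: payoff_shift a1_def a2_def)
    have br1: "best_resp1 A1 u1 a1 a2" if w1: "V1_pp A1 A2 u1 u2 = {w}" for w
    proof -
      have "u1 b a2 \<le> u1 a1 a2" if b: "b \<in> A1" for b
      proof -
        define \<sigma> where "\<sigma> h' = (if h' = [] then b else \<mu>1 (h@h'))" for h'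
        have s\<sigma>: "strategy A1 A2 A1 (Suc n) \<sigma>"
          unfolding strategy_def
        proof (intro allI impI ballI)
          fix j h' assume j: "j < Suc n" and h': "h' \<in> histories A1 A2 j"
          have "h @ h' \<in> histories A1 A2 (k + j)" using hk h' by (auto simp: histories_def)
          moreover have "k + j < T" using j Suc.prems k_def by simp
          ultimately show "\<sigma> h' \<in> A1" using s1 b unfolding strategy_def \<sigma>_def by auto
        qed
        have "payoff u1 (Suc n) \<sigma> (\<lambda>h'. \<mu>2 (h@h')) = u1 b a2 + payoff u1 n (\<lambda>h'. \<mu>1 ((h@[(b,a2)])@h')) (\<lambda>h'. \<mu>2 ((h@[(b,a2)])@h'))"
          by (simp add: payoff_shift a2_def \<sigma>_def)
        also have "payoff u1 n (\<lambda>h'. \<mu>1 ((h@[(b,a2)])@h')) (\<lambda>h'. \<mu>2 ((h@[(b,a2)])@h')) = real n * w"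
          using bspec[OF IH ext[OF SigmaI[OF b a2A]]] w1 by auto
        finally have d: "payoff u1 (Suc n) \<sigma> (\<lambda>h'. \<mu>2 (h@h')) = u1 b a2 + real n * w" .
        have o: "payoff u1 (Suc n) (\<lambda>h'. \<mu>1 (h@h')) (\<lambda>h'. \<mu>2 (h@h')) = u1 a1 a2 + real n * w"
          using peq[of "(a1,a2)" u1] bspec[OF IH ext[OF SigmaI[OF a1A a2A]]] w1 by auto
        have "payoff u1 (Suc n) \<sigma> (\<lambda>h'. \<mu>2 (h@h')) \<le> payoff u1 (Suc n) (\<lambda>h'. \<mu>1 (h@h')) (\<lambda>h'. \<mu>2 (h@h'))"
          using NR s\<sigma> unfolding nash_rep_def by blast
        then show ?thesis using d o by simp
      qed
      then show ?thesis using a1A by (simp add: best_resp1_def)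
    qed
    have br2: "best_resp2 A2 u2 a1 a2" if w2: "V2_pp A1 A2 u1 u2 = {w}" for w
    proof -
      have "u2 a1 b \<le> u2 a1 a2" if b: "b \<in> A2" for b
      proof -
        define \<sigma> where "\<sigma> h' = (if h' = [] then b else \<mu>2 (h@h'))" for h'
        have s\<sigma>: "strategy A1 A2 A2 (Suc n) \<sigma>"
          unfolding strategy_def
        proof (intro allI impI ballI)
          fix j h' assume j: "j < Suc n" and h': "h' \<in> histories A1 A2 j"
          have "h @ h' \<in> histories A1 A2 (k + j)" using hk h' by (auto simp: histories_def)
          moreover have "k + j < T" using j Suc.prems k_def by simp
          ultimately show "\<sigma> h' \<in> A2" using s2 b unfolding strategy_def \<sigma>_def by auto
        qed
        have "payoff u2 (Suc n) (\<lambda>h'. \<mu>1 (h@h')) \<sigma> = u2 a1 b + payoff u2 n (\<lambda>h'. \<mu>1 ((h@[(a1,b)])@h')) (\<lambda>h'. \<mu>2 ((h@[(a1,b)])@h'))"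
          by (simp add: payoff_shift a1_def \<sigma>_def)
        also have "payoff u2 n (\<lambda>h'. \<mu>1 ((h@[(a1,b)])@h')) (\<lambda>h'. \<mu>2 ((h@[(a1,b)])@h')) = real n * w"
          using bspec[OF IH ext[OF SigmaI[OF a1A b]]] w2 by auto
        finally have d: "payoff u2 (Suc n) (\<lambda>h'. \<mu>1 (h@h')) \<sigma> = u2 a1 b + real n * w" .
        have o: "payoff u2 (Suc n) (\<lambda>h'. \<mu>1 (h@h')) (\<lambda>h'. \<mu>2 (h@h')) = u2 a1 a2 + real n * w"
          using peq[of "(a1,a2)" u2] bspec[OF IH ext[OF SigmaI[OF a1A a2A]]] w2 by auto
        have "payoff u2 (Suc n) (\<lambda>h'. \<mu>1 (h@h')) \<sigma> \<le> payoff u2 (Suc n) (\<lambda>h'. \<mu>1 (h@h')) (\<lambda>h'. \<mu>2 (h@h'))"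
          using NR s\<sigma> unfolding nash_rep_def by blast
        then show ?thesis using d o by simp
      qed
      then show ?thesis using a2A by (simp add: best_resp2_def)
    qed
    have nash: "(a1, a2) \<in> nash_pp A1 A2 u1 u2" using H a1A a2A br1 br2 by blast
    have pay1: "payoff u1 (Suc n) (\<lambda>h'. \<mu>1 (h@h')) (\<lambda>h'. \<mu>2 (h@h')) = real (Suc n) * w"
      if "V1_pp A1 A2 u1 u2 = {w}" for w
    proof -
      have "u1 a1 a2 \<in> V1_pp A1 A2 u1 u2" using nash unfolding V1_pp_def by force
      then have "u1 a1 a2 = w" using that by simp
      moreover have "payoff u1 (Suc n) (\<lambda>h'. \<mu>1 (h@h')) (\<lambda>h'. \<mu>2 (h@h')) = u1 a1 a2 + real n * w"
        using peq[of "(a1,a2)" u1] bspec[OF IH ext[OF SigmaI[OF a1A a2A]]] that by auto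
      ultimately show ?thesis by (simp add: algebra_simps)
    qed
    have pay2: "payoff u2 (Suc n) (\<lambda>h'. \<mu>1 (h@h')) (\<lambda>h'. \<mu>2 (h@h')) = real (Suc n) * v"
      if "V2_pp A1 A2 u1 u2 = {v}" for v
    proof -
      have "u2 a1 a2 \<in> V2_pp A1 A2 u1 u2" using nash unfolding V2_pp_def by force
      then have "u2 a1 a2 = v" using that by simp
      moreover have "payoff u2 (Suc n) (\<lambda>h'. \<mu>1 (h@h')) (\<lambda>h'. \<mu>2 (h@h')) = u2 a1 a2 + real n * v"
        using peq[of "(a1,a2)" u2] bspec[OF IH ext[OF SigmaI[OF a1A a2A]]] that by auto
      ultimately show ?thesis by (simp add: algebra_simps)
    qed
    show "(0 < Suc n \<longrightarrow> (\<mu>1 h, \<mu>2 h) \<in> nash_pp A1 A2 u1 u2)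
     \<and> (\<forall>w. V1_pp A1 A2 u1 u2 = {w} \<longrightarrow> payoff u1 (Suc n) (\<lambda>h'. \<mu>1 (h@h')) (\<lambda>h'. \<mu>2 (h@h')) = real (Suc n) * w)
     \<and> (\<forall>v. V2_pp A1 A2 u1 u2 = {v} \<longrightarrow> payoff u2 (Suc n) (\<lambda>h'. \<mu>1 (h@h')) (\<lambda>h'. \<mu>2 (h@h')) = real (Suc n) * v)"
      using nash pay1 pay2 by (simp add: a1_def a2_def)
  qed
qed



lemma V1_gt:
  assumes "finite A1" "finite A2" "card (V1_pp A1 A2 u1 u2) > 1"
  shows "\<exists>x\<in>nash_pp A1 A2 u1 u2. \<exists>x'\<in>nash_pp A1 A2 u1 u2. u1 (fst x') (snd x') < u1 (fst x) (snd x)"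
proof -
  have "nash_pp A1 A2 u1 u2 \<subseteq> A1 \<times> A2" by (auto simp: nash_pp_def)
  then have "finite (nash_pp A1 A2 u1 u2)" using assms finite_subset by blast
  then have "finite (V1_pp A1 A2 u1 u2)" by (simp add: V1_pp_def)
  then obtain a b where ab: "a \<in> V1_pp A1 A2 u1 u2" "b \<in> V1_pp A1 A2 u1 u2" "a < b" using card_gt1 assms(3) by blast
  then show ?thesis unfolding V1_pp_def by force
qed

lemma V2_gt:
  assumes "finite A1" "finite A2" "card (V2_pp A1 A2 u1 u2) > 1"
  shows "\<exists>x\<in>nash_pp A1 A2 u1 u2. \<exists>x'\<in>nash_pp A1 A2 u1 u2. u2 (fst x') (snd x') < u2 (fst x) (snd x)"
proof -
  have "nash_pp A1 A2 u1 u2 \<subseteq> A1 \<times> A2" by (auto simp: nash_pp_def)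
  then have "finite (nash_pp A1 A2 u1 u2)" using assms finite_subset by blast
  then have "finite (V2_pp A1 A2 u1 u2)" by (simp add: V2_pp_def)
  then obtain a b where ab: "a \<in> V2_pp A1 A2 u1 u2" "b \<in> V2_pp A1 A2 u1 u2" "a < b" using card_gt1 assms(3) by blast
  then show ?thesis unfolding V2_pp_def by force
qed

lemma card1_ne: "card (V1_pp A1 A2 u1 u2) = 1 \<Longrightarrow> nash_pp A1 A2 u1 u2 \<noteq> {}"
  by (auto simp: V1_pp_def)
lemma card2_ne: "card (V2_pp A1 A2 u1 u2) = 1 \<Longrightarrow> nash_pp A1 A2 u1 u2 \<noteq> {}"
  by (auto simp: V2_pp_def)

lemma arch_mono: fixes g :: "'c \<Rightarrow> real"
  assumes "\<forall>b\<in>A. g b \<le> real m1 * d" "d \<ge> 0" "m1 \<le> m" shows "\<forall>b\<in>A. g b \<le> real m * d"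
proof
  fix b assume "b \<in> A"
  then have "g b \<le> real m1 * d" using assms by blast
  also have "\<dots> \<le> real m * d" using assms by (intro mult_right_mono) auto
  finally show "g b \<le> real m * d" .
qed

theorem mainTheorem1:
  fixes A1 :: "'a set" and A2 :: "'b set" and u1 u2 :: "'a \<Rightarrow> 'b \<Rightarrow> real"
  assumes "finite A1" "A1 \<noteq> {}" "finite A2" "A2 \<noteq> {}"
  shows "(\<exists>T::nat. T \<ge> 1 \<and> (\<exists>\<mu>1 \<mu>2. spe A1 A2 u1 u2 T \<mu>1 \<mu>2 \<and>
             locally_suboptimal A1 A2 u1 u2 T \<mu>1 \<mu>2))
    \<longleftrightarrow>
     ((card (V1_pp A1 A2 u1 u2) > 1 \<and> card (V2_pp A1 A2 u1 u2) > 1 \<and>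
        (\<exists>a1\<in>A1. \<exists>a2\<in>A2. (a1, a2) \<notin> nash_pp A1 A2 u1 u2))
    \<or> (card (V1_pp A1 A2 u1 u2) > 1 \<and> card (V2_pp A1 A2 u1 u2) = 1 \<and>
        (\<exists>a1\<in>A1. \<exists>a1'\<in>A1. \<exists>a2\<in>A2. u1 a1 a2 < u1 a1' a2 \<and> best_resp2 A2 u2 a1 a2))
    \<or> (card (V1_pp A1 A2 u1 u2) = 1 \<and> card (V2_pp A1 A2 u1 u2) > 1 \<and>
        (\<exists>a1\<in>A1. \<exists>a2\<in>A2. \<exists>a2'\<in>A2. u2 a1 a2 < u2 a1 a2' \<and> best_resp1 A1 u1 a1 a2)))"
    (is "?L \<longleftrightarrow> ?R")
proof
  assume "?L"
  then obtain T \<mu>1 \<mu>2 where T: "T \<ge> 1" and spe: "spe A1 A2 u1 u2 T \<mu>1 \<mu>2"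
    and ls: "locally_suboptimal A1 A2 u1 u2 T \<mu>1 \<mu>2" by blast
  show "?R"
  proof (rule ccontr)
    assume nR: "\<not> ?R"
    let ?N = "nash_pp A1 A2 u1 u2"
    let ?V1 = "V1_pp A1 A2 u1 u2"
    let ?V2 = "V2_pp A1 A2 u1 u2"
    have "?N \<subseteq> A1 \<times> A2" by (auto simp: nash_pp_def)
    then have finN: "finite ?N" using assms finite_subset by blast
    have fin1: "finite ?V1" using finN by (simp add: V1_pp_def)
    have fin2: "finite ?V2" using finN by (simp add: V2_pp_def)
    obtain x1 x2 where x: "x1 \<in> A1" "x2 \<in> A2" using assms by blast
    define h0 where "h0 = replicate (T - 1) (x1, x2)"
    have h0: "h0 \<in> histories A1 A2 (T - 1)" using x by (auto simp: histories_def h0_def)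
    have "nash_rep A1 A2 u1 u2 (T - (T - 1)) (\<lambda>h'. \<mu>1 (h0@h')) (\<lambda>h'. \<mu>2 (h0@h'))"
      using spe h0 T unfolding spe_def by (meson diff_less zero_less_one less_le_trans)
    moreover have "T - (T - 1) = Suc 0" using T by simp
    ultimately have "((\<lambda>h'. \<mu>1 (h0@h')) [], (\<lambda>h'. \<mu>2 (h0@h')) []) \<in> ?N"
      using last_round by metis
    then have Nne: "?N \<noteq> {}" by blast
    have c1: "card ?V1 \<ge> 1" using Nne fin1 by (simp add: V1_pp_def Suc_le_eq card_gt_0_iff)
    have c2: "card ?V2 \<ge> 1" using Nne fin2 by (simp add: V2_pp_def Suc_le_eq card_gt_0_iff)
    have H: "\<forall>a1\<in>A1. \<forall>a2\<in>A2. ((\<exists>w. ?V1 = {w}) \<longrightarrow> best_resp1 A1 u1 a1 a2)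
     \<longrightarrow> ((\<exists>v. ?V2 = {v}) \<longrightarrow> best_resp2 A2 u2 a1 a2) \<longrightarrow> (a1,a2) \<in> ?N"
    proof (intro ballI impI)
      fix a1 a2 assume a: "a1 \<in> A1" "a2 \<in> A2"
        and h1: "(\<exists>w. ?V1 = {w}) \<longrightarrow> best_resp1 A1 u1 a1 a2"
        and h2: "(\<exists>v. ?V2 = {v}) \<longrightarrow> best_resp2 A2 u2 a1 a2"
      have e1: "card ?V1 = 1 \<Longrightarrow> best_resp1 A1 u1 a1 a2" using h1 by (simp add: card_1_singleton_iff)
      have e2: "card ?V2 = 1 \<Longrightarrow> best_resp2 A2 u2 a1 a2" using h2 by (simp add: card_1_singleton_iff)
      consider "card ?V1 > 1" "card ?V2 > 1" | "card ?V1 > 1" "card ?V2 = 1"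
        | "card ?V1 = 1" "card ?V2 > 1" | "card ?V1 = 1" "card ?V2 = 1" using c1 c2 by linarith
      then show "(a1, a2) \<in> ?N"
      proof cases
        case 1 then show ?thesis using nR a by blast
      next
        case 2
        then have b2: "best_resp2 A2 u2 a1 a2" using e2 by blast
        have "\<forall>b\<in>A1. u1 b a2 \<le> u1 a1 a2" using nR 2 a b2 by (meson not_le)
        then show ?thesis using a b2 by (simp add: nash_pp_def best_resp2_def)
      next
        case 3
        then have b1: "best_resp1 A1 u1 a1 a2" using e1 by blast
        have "\<forall>b\<in>A2. u2 a1 b \<le> u2 a1 a2" using nR 3 a b1 by (meson not_le)
        then show ?thesis using a b1 by (simp add: nash_pp_def best_resp1_def)
      next
        case 4 then show ?thesis using e1 e2 by (simp add: nash_pp_def best_resp1_def best_resp2_def)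
      qed
    qed
    obtain k h where k: "k < T" and h: "h \<in> histories A1 A2 k" and nn: "(\<mu>1 h, \<mu>2 h) \<notin> ?N"
      using ls unfolding locally_suboptimal_def by blast
    have tk: "T - (T - k) = k" "0 < T - k" "T - k \<le> T" using k by auto
    have "\<forall>h\<in>histories A1 A2 k. (\<mu>1 h, \<mu>2 h) \<in> ?N"
      using BI[OF spe H tk(3)] unfolding tk(1) using tk(2) by blast
    then show False using h nn by blast
  qed
next
  assume R: "?R"
  let ?N = "nash_pp A1 A2 u1 u2"
  have fin: "\<exists>x x' y y' a1 a2 m. a1 \<in> A1 \<and> a2 \<in> A2 \<and> (a1, a2) \<notin> ?N \<and>
     x \<in> ?N \<and> x' \<in> ?N \<and> y \<in> ?N \<and> y' \<in> ?N \<and>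
     (\<forall>b\<in>A1. u1 b a2 + real m * u1 (fst (if b = a1 then x else x')) (snd (if b = a1 then x else x')) \<le> u1 a1 a2 + real m * u1 (fst x) (snd x)) \<and>
     (\<forall>b\<in>A2. u2 a1 b + real m * u2 (fst (if b = a2 then y else y')) (snd (if b = a2 then y else y')) \<le> u2 a1 a2 + real m * u2 (fst y) (snd y))"
  proof -
    have P1: "\<exists>m1. \<forall>m\<ge>m1. \<forall>b\<in>A1. u1 b a2 + real m * u1 (fst (if b = a1 then x else x')) (snd (if b = a1 then x else x')) \<le> u1 a1 a2 + real m * u1 (fst x) (snd x)"
      if lt: "u1 (fst x') (snd x') < u1 (fst x) (snd x)" for a1 a2 x x'
    proof -
      obtain m1 where m1: "\<forall>b\<in>A1. u1 b a2 - u1 a1 a2 \<le> real m1 * (u1 (fst x) (snd x) - u1 (fst x') (snd x'))"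
        using arch_fin[OF assms(1), of "u1 (fst x) (snd x) - u1 (fst x') (snd x')" "\<lambda>b. u1 b a2 - u1 a1 a2"] lt by auto
      have "\<forall>b\<in>A1. u1 b a2 + real m * u1 (fst (if b = a1 then x else x')) (snd (if b = a1 then x else x')) \<le> u1 a1 a2 + real m * u1 (fst x) (snd x)"
        if "m \<ge> m1" for m
      proof
        fix b assume b: "b \<in> A1"
        have "u1 b a2 - u1 a1 a2 \<le> real m * (u1 (fst x) (snd x) - u1 (fst x') (snd x'))"
          using arch_mono[OF m1 _ that] \<open>u1 (fst x') (snd x') < u1 (fst x) (snd x)\<close> b by auto
        then show "u1 b a2 + real m * u1 (fst (if b = a1 then x else x')) (snd (if b = a1 then x else x')) \<le> u1 a1 a2 + real m * u1 (fst x) (snd x)"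
          by (cases "b = a1") (auto simp: algebra_simps)
      qed
      then show ?thesis by blast
    qed
    have P2: "\<exists>m1. \<forall>m\<ge>m1. \<forall>b\<in>A2. u2 a1 b + real m * u2 (fst (if b = a2 then y else y')) (snd (if b = a2 then y else y')) \<le> u2 a1 a2 + real m * u2 (fst y) (snd y)"
      if lt: "u2 (fst y') (snd y') < u2 (fst y) (snd y)" for a1 a2 y y'
    proof -
      obtain m1 where m1: "\<forall>b\<in>A2. u2 a1 b - u2 a1 a2 \<le> real m1 * (u2 (fst y) (snd y) - u2 (fst y') (snd y'))"
        using arch_fin[OF assms(3), of "u2 (fst y) (snd y) - u2 (fst y') (snd y')" "\<lambda>b. u2 a1 b - u2 a1 a2"] lt by auto
      have "\<forall>b\<in>A2. u2 a1 b + real m * u2 (fst (if b = a2 then y else y')) (snd (if b = a2 then y else y')) \<le> u2 a1 a2 + real m * u2 (fst y) (snd y)"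
        if "m \<ge> m1" for m
      proof
        fix b assume b: "b \<in> A2"
        have "u2 a1 b - u2 a1 a2 \<le> real m * (u2 (fst y) (snd y) - u2 (fst y') (snd y'))"
          using arch_mono[OF m1 _ that] \<open>u2 (fst y') (snd y') < u2 (fst y) (snd y)\<close> b by auto
        then show "u2 a1 b + real m * u2 (fst (if b = a2 then y else y')) (snd (if b = a2 then y else y')) \<le> u2 a1 a2 + real m * u2 (fst y) (snd y)"
          by (cases "b = a2") (auto simp: algebra_simps)
      qed
      then show ?thesis by blast
    qed
    from R consider
      (c1) "card (V1_pp A1 A2 u1 u2) > 1" "card (V2_pp A1 A2 u1 u2) > 1" "\<exists>a1\<in>A1. \<exists>a2\<in>A2. (a1, a2) \<notin> ?N"
    | (c2) "card (V1_pp A1 A2 u1 u2) > 1" "card (V2_pp A1 A2 u1 u2) = 1" "\<exists>a1\<in>A1. \<exists>a1'\<in>A1. \<exists>a2\<in>A2. u1 a1 a2 < u1 a1' a2 \<and> best_resp2 A2 u2 a1 a2"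
    | (c3) "card (V1_pp A1 A2 u1 u2) = 1" "card (V2_pp A1 A2 u1 u2) > 1" "\<exists>a1\<in>A1. \<exists>a2\<in>A2. \<exists>a2'\<in>A2. u2 a1 a2 < u2 a1 a2' \<and> best_resp1 A1 u1 a1 a2"
      by blast
    then show ?thesis
    proof cases
      case c1
      obtain a1 a2 where a: "a1 \<in> A1" "a2 \<in> A2" "(a1, a2) \<notin> ?N" using c1 by blast
      obtain x x' where x: "x \<in> ?N" "x' \<in> ?N" "u1 (fst x') (snd x') < u1 (fst x) (snd x)"
        using V1_gt[OF assms(1,3) c1(1)] by blast
      obtain y y' where y: "y \<in> ?N" "y' \<in> ?N" "u2 (fst y') (snd y') < u2 (fst y) (snd y)"
        using V2_gt[OF assms(1,3) c1(2)] by blast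
      obtain m1 where m1: "\<forall>m\<ge>m1. \<forall>b\<in>A1. u1 b a2 + real m * u1 (fst (if b = a1 then x else x')) (snd (if b = a1 then x else x')) \<le> u1 a1 a2 + real m * u1 (fst x) (snd x)"
        using P1[OF x(3)] by blast
      obtain m2 where m2: "\<forall>m\<ge>m2. \<forall>b\<in>A2. u2 a1 b + real m * u2 (fst (if b = a2 then y else y')) (snd (if b = a2 then y else y')) \<le> u2 a1 a2 + real m * u2 (fst y) (snd y)"
        using P2[OF y(3)] by blast
      have "max m1 m2 \<ge> m1" "max m1 m2 \<ge> m2" by auto
      then show ?thesis using a x y m1 m2 by blast
    next
      case c2
      obtain a1 a1' a2 where a: "a1 \<in> A1" "a1' \<in> A1" "a2 \<in> A2" "u1 a1 a2 < u1 a1' a2" "best_resp2 A2 u2 a1 a2"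
        using c2 by blast
      have nn: "(a1, a2) \<notin> ?N" using a by (force simp: nash_pp_def)
      obtain x x' where x: "x \<in> ?N" "x' \<in> ?N" "u1 (fst x') (snd x') < u1 (fst x) (snd x)"
        using V1_gt[OF assms(1,3) c2(1)] by blast
      obtain z where z: "z \<in> ?N" using card2_ne[OF c2(2)] by blast
      obtain m1 where m1: "\<forall>m\<ge>m1. \<forall>b\<in>A1. u1 b a2 + real m * u1 (fst (if b = a1 then x else x')) (snd (if b = a1 then x else x')) \<le> u1 a1 a2 + real m * u1 (fst x) (snd x)"
        using P1[OF x(3)] by blast
      have "\<forall>b\<in>A2. u2 a1 b + real m1 * u2 (fst (if b = a2 then z else z)) (snd (if b = a2 then z else z)) \<le> u2 a1 a2 + real m1 * u2 (fst z) (snd z)"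
        using a(5) by (simp add: best_resp2_def)
      then show ?thesis using a nn x z m1 by blast
    next
      case c3
      obtain a1 a2 a2' where a: "a1 \<in> A1" "a2 \<in> A2" "a2' \<in> A2" "u2 a1 a2 < u2 a1 a2'" "best_resp1 A1 u1 a1 a2"
        using c3 by blast
      have nn: "(a1, a2) \<notin> ?N" using a by (force simp: nash_pp_def)
      obtain y y' where y: "y \<in> ?N" "y' \<in> ?N" "u2 (fst y') (snd y') < u2 (fst y) (snd y)"
        using V2_gt[OF assms(1,3) c3(2)] by blast
      obtain z where z: "z \<in> ?N" using card1_ne[OF c3(1)] by blast
      obtain m2 where m2: "\<forall>m\<ge>m2. \<forall>b\<in>A2. u2 a1 b + real m * u2 (fst (if b = a2 then y else y')) (snd (if b = a2 then y else y')) \<le> u2 a1 a2 + real m * u2 (fst y) (snd y)"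
        using P2[OF y(3)] by blast
      have "\<forall>b\<in>A1. u1 b a2 + real m2 * u1 (fst (if b = a1 then z else z)) (snd (if b = a1 then z else z)) \<le> u1 a1 a2 + real m2 * u1 (fst z) (snd z)"
        using a(5) by (simp add: best_resp1_def)
      then show ?thesis using a nn y z m2 by blast
    qed
  qed
  then obtain x x' y y' a1 a2 m where a: "a1 \<in> A1" "a2 \<in> A2" "(a1, a2) \<notin> ?N"
    and N: "x \<in> ?N" "x' \<in> ?N" "y \<in> ?N" "y' \<in> ?N"
    and C1: "\<forall>b\<in>A1. u1 b a2 + real m * u1 (fst (if b = a1 then x else x')) (snd (if b = a1 then x else x')) \<le> u1 a1 a2 + real m * u1 (fst x) (snd x)"
    and C2: "\<forall>b\<in>A2. u2 a1 b + real m * u2 (fst (if b = a2 then y else y')) (snd (if b = a2 then y else y')) \<le> u2 a1 a2 + real m * u2 (fst y) (snd y)"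
    by blast
  obtain \<mu>1 \<mu>2 where s: "spe A1 A2 u1 u2 (Suc (2*m)) \<mu>1 \<mu>2" "\<mu>1 [] = a1" "\<mu>2 [] = a2"
    using construct[OF a(1,2) N C1 C2] by blast
  have "locally_suboptimal A1 A2 u1 u2 (Suc (2*m)) \<mu>1 \<mu>2"
    unfolding locally_suboptimal_def
    using s a(3) by (intro exI[of _ 0]) (auto simp: histories_def)
  then show "?L" using s by (intro exI[of _ "Suc (2*m)"]) auto
qed

end
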